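(* Let $\{y_k\}$ be the random sequence generated by the PASKM algorithm. Take $0 \leq 1-\alpha < 1$, $0 \le \omega < 1$, $0 < \delta < \frac{2(1-\omega+\alpha\omega)}{1+2\omega-2\alpha\omega}$ and $\alpha\gamma = \alpha\delta + \omega\delta(1-\alpha)$. Define $\bar{y}_k = \frac{1}{k}\sum_{l=1}^{k} y_l$. Then $$\mathbb{E}[f(\bar{y}_k)] \leq \frac{(1-\omega+\alpha\omega)^2\, d(y_0,P)^2 + 2\delta(\delta-2+3\omega-3\alpha\omega+\delta\omega-\delta\alpha\omega) f(y_0)}{2\delta k(2-2\omega+2\alpha\omega-2\delta\omega+2\delta\alpha\omega-\delta)}.$$
   Context: Linear feasibility problem $Ax \leq b$ with $A \in \mathbb{R}^{m\times n}$, $b \in \mathbb{R}^m$, assumed consistent, with rows $a_i^T$ normalized ($\|a_i\|=1$). $P = \{x : Ax \leq b\}$, $\mathcal{P}(x)$ the Euclidean projection onto $P$, $d(x,P) = \|x-\mathcal{P}(x)\|$. Sampling: at each iteration a set $\tau$ of $\beta$ rows is chosen uniformly at random among all $\binom{m}{\beta}$ subsets and $i^* = \arg\max_{i\in\tau}(a_i^Ty-b_i)^+$ for the current point $y$; $\mathbb{E}_{\mathbb{S}}$ denotes expectation over this sampling. $f(x) = \mathbb{E}_{\mathbb{S}}\big[\tfrac12|(a_{i^*}^Tx-b_{i^*})^+|^2\big]$. PASKM algorithm: $v_0 = x_0$ (so $y_0 = x_0 = v_0$); for $k\ge0$: $y_k = \alpha v_k + (1-\alpha)x_k$; sample and pick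 $i^*$ at $y_k$; $x_{k+1} = y_k - \delta(a_{i^*}^Ty_k-b_{i^*})^+a_{i^*}$; $v_{k+1} = \omega v_k + (1-\omega)y_k - \gamma(a_{i^*}^Ty_k-b_{i^*})^+a_{i^*}$. *)

theory Defs
  imports "HOL-Analysis.Analysis"
begin

text \<open>Rows of A are indexed by the finite type 'm (so m = CARD('m)), vectors live in real^'n.\<close>

definition viol :: "real^'n^'m \<Rightarrow> real^'m \<Rightarrow> 'm \<Rightarrow> real^'n \<Rightarrow> real" where
  "viol A b i x = max 0 (A$i \<bullet> x - b$i)"

definition feas_set :: "real^'n^'m \<Rightarrow> real^'m \<Rightarrow> (real^'n) set" where
  "feas_set A b = {x. \<forall>i. A$i \<bullet> x \<le> b$i}"

definition samples :: "nat \<Rightarrow> ('m::finite) set set" where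
  "samples \<beta> = {\<tau>. card \<tau> = \<beta>}"

definition fobj :: "real^'n^('m::finite) \<Rightarrow> real^'m \<Rightarrow> nat \<Rightarrow> real^'n \<Rightarrow> real" where
  "fobj A b \<beta> x =
     (\<Sum>\<tau>\<in>samples \<beta>. (1/2) * (Max ((\<lambda>i. viol A b i x) ` \<tau>))^2) / real (card (samples \<beta> :: 'm set set))"

definition paskm_step ::
  "real^'n^'m \<Rightarrow> real^'m \<Rightarrow> ('m set \<Rightarrow> real^'n \<Rightarrow> 'm) \<Rightarrow> real \<Rightarrow> real \<Rightarrow> real \<Rightarrow> real
   \<Rightarrow> 'm set \<Rightarrow> ((real^'n) \<times> (real^'n)) \<Rightarrow> ((real^'n) \<times> (real^'n))" where
  "paskm_step A b sel \<alpha> \<omega> \<delta> \<gamma> \<tau> p =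
     (let x = fst p; v = snd p;
          y = \<alpha> *\<^sub>R v + (1 - \<alpha>) *\<^sub>R x;
          i = sel \<tau> y;
          r = viol A b i y
      in (y - (\<delta> * r) *\<^sub>R (A$i),
          \<omega> *\<^sub>R v + (1 - \<omega>) *\<^sub>R y - (\<gamma> * r) *\<^sub>R (A$i)))"

text \<open>y_k as a function of the samples ts = [tau_0, ..., tau_{k-1}], with x_0 = v_0.\<close>
definition paskm_y ::
  "real^'n^'m \<Rightarrow> real^'m \<Rightarrow> ('m set \<Rightarrow> real^'n \<Rightarrow> 'm) \<Rightarrow> real \<Rightarrow> real \<Rightarrow> real \<Rightarrow> real
   \<Rightarrow> real^'n \<Rightarrow> 'm set list \<Rightarrow> real^'n" where
  "paskm_y A b sel \<alpha> \<omega> \<delta> \<gamma> x0 ts =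
     (let p = fold (paskm_step A b sel \<alpha> \<omega> \<delta> \<gamma>) ts (x0, x0)
      in \<alpha> *\<^sub>R snd p + (1 - \<alpha>) *\<^sub>R fst p)"

definition paskm_ybar ::
  "real^'n^'m \<Rightarrow> real^'m \<Rightarrow> ('m set \<Rightarrow> real^'n \<Rightarrow> 'm) \<Rightarrow> real \<Rightarrow> real \<Rightarrow> real \<Rightarrow> real
   \<Rightarrow> real^'n \<Rightarrow> 'm set list \<Rightarrow> real^'n" where
  "paskm_ybar A b sel \<alpha> \<omega> \<delta> \<gamma> x0 ts =
     (1 / real (length ts)) *\<^sub>R (\<Sum>l=1..length ts. paskm_y A b sel \<alpha> \<omega> \<delta> \<gamma> x0 (take l ts))"

text \<open>All possible sample histories of length k (i.i.d. uniform sampling = uniform on this set).\<close>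
definition sample_seqs :: "nat \<Rightarrow> nat \<Rightarrow> ('m::finite) set list set" where
  "sample_seqs \<beta> k = {ts. length ts = k \<and> set ts \<subseteq> samples \<beta>}"

definition expect_seqs :: "nat \<Rightarrow> nat \<Rightarrow> (('m::finite) set list \<Rightarrow> real) \<Rightarrow> real" where
  "expect_seqs \<beta> k F = (\<Sum>ts\<in>sample_seqs \<beta> k. F ts) / real (card (sample_seqs \<beta> k :: 'm set list set))"

end

theory Submission imports Defs begin


definition avg :: "'a set \<Rightarrow> ('a \<Rightarrow> real) \<Rightarrow> real" where
  "avg X G = (\<Sum>x\<in>X. G x) / real (card X)"

lemma avg_mono: "(\<And>x. x \<in> X \<Longrightarrow> G x \<le> H x) \<Longrightarrow> avg X G \<le> avg X H"
  unfolding avg_def by (intro divide_right_mono sum_mono) auto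

lemma avg_add: "avg X (\<lambda>x. G x + H x) = avg X G + avg X H"
  unfolding avg_def by (simp add: sum.distrib add_divide_distrib)

lemma avg_diff: "avg X (\<lambda>x. G x - H x) = avg X G - avg X H"
  unfolding avg_def by (simp add: sum_subtractf diff_divide_distrib)

lemma avg_cmult: "avg X (\<lambda>x. c * G x) = c * avg X G"
  unfolding avg_def by (simp add: sum_distrib_left[symmetric])

lemma avg_const: "finite X \<Longrightarrow> X \<noteq> {} \<Longrightarrow> avg X (\<lambda>x. c) = c"
  unfolding avg_def by simp

lemma avg_nonneg: "(\<And>x. x \<in> X \<Longrightarrow> 0 \<le> G x) \<Longrightarrow> 0 \<le> avg X G"
  unfolding avg_def by (intro divide_nonneg_nonneg sum_nonneg) auto

lemma avg_cong: "(\<And>x. x \<in> X \<Longrightarrow> G x = H x) \<Longrightarrow> avg X G = avg X H"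
  unfolding avg_def by simp

lemma finite_samples: "finite (samples \<beta> :: ('m::finite) set set)"
  by simp

lemma samples_ne: "\<beta> \<le> CARD('m::finite) \<Longrightarrow> samples \<beta> \<noteq> ({} :: 'm set set)"
  unfolding samples_def
  by (metis (mono_tags, lifting) empty_Collect_eq obtain_subset_with_card_n)

lemma finite_seqs: "finite (sample_seqs \<beta> k :: ('m::finite) set list set)"
proof -
  have "(sample_seqs \<beta> k :: 'm set list set) = {xs. set xs \<subseteq> samples \<beta> \<and> length xs = k}"
    unfolding sample_seqs_def by auto
  then show ?thesis using finite_lists_length_eq[of "samples \<beta> :: 'm set set" k] by simp
qed

lemma seqs_ne: "\<beta> \<le> CARD('m::finite) \<Longrightarrow> sample_seqs \<beta> k \<noteq> ({} :: 'm set list set)"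
proof -
  assume "\<beta> \<le> CARD('m)"
  then obtain t :: "'m set" where "t \<in> samples \<beta>" using samples_ne by blast
  then have "replicate k t \<in> sample_seqs \<beta> k" unfolding sample_seqs_def by auto
  then show ?thesis by blast
qed

lemma expect_avg: "expect_seqs \<beta> k F = avg (sample_seqs \<beta> k) F"
  unfolding expect_seqs_def avg_def by simp

lemma seqs_Suc: "sample_seqs \<beta> (Suc l) = (\<lambda>(ts,t). ts @ [t]) ` (sample_seqs \<beta> l \<times> samples \<beta>)"
  unfolding sample_seqs_def by (auto simp: length_Suc_conv_rev image_iff)

lemma avg_Suc:
  "avg (sample_seqs \<beta> (Suc l) :: ('m::finite) set list set) F
   = avg (sample_seqs \<beta> l) (\<lambda>ts. avg (samples \<beta>) (\<lambda>t. F (ts @ [t])))"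
proof -
  let ?S = "sample_seqs \<beta> l :: 'm set list set" and ?T = "samples \<beta> :: 'm set set"
  have inj: "inj_on (\<lambda>(ts,t). ts @ [t]) (?S \<times> ?T)" by (auto simp: inj_on_def)
  have s: "sum F (sample_seqs \<beta> (Suc l)) = (\<Sum>ts\<in>?S. \<Sum>t\<in>?T. F (ts @ [t]))"
    unfolding seqs_Suc sum.reindex[OF inj] by (simp add: sum.cartesian_product prod.case_distrib)
  have c: "card (sample_seqs \<beta> (Suc l) :: 'm set list set) = card ?S * card ?T"
    unfolding seqs_Suc card_image[OF inj] by (simp add: card_cartesian_product)
  show ?thesis unfolding avg_def s c
    by (simp add: sum_divide_distrib[symmetric] divide_divide_eq_left mult.commute)
qed

lemma avg_take:
  assumes "\<beta> \<le> CARD('m::finite)" "l \<le> k"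
  shows "avg (sample_seqs \<beta> k :: 'm set list set) (\<lambda>ts. F (take l ts)) = avg (sample_seqs \<beta> l) F"
  using assms(2)
proof (induction k rule: dec_induct)
  case base
  show ?case by (rule avg_cong) (simp add: sample_seqs_def)
next
  case (step k)
  have "avg (sample_seqs \<beta> (Suc k) :: 'm set list set) (\<lambda>ts. F (take l ts))
      = avg (sample_seqs \<beta> k) (\<lambda>ts. avg (samples \<beta>) (\<lambda>t. F (take l (ts @ [t]))))"
    by (rule avg_Suc)
  also have "\<dots> = avg (sample_seqs \<beta> k) (\<lambda>ts. F (take l ts))"
    using step(1) assms(1)
    by (intro avg_cong) (simp add: sample_seqs_def avg_const samples_ne)
  finally show ?case using step by simp
qed



definition Mx :: "real^'n^'m \<Rightarrow> real^'m \<Rightarrow> 'm set \<Rightarrow> real^'n \<Rightarrow> real" where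
  "Mx A b \<tau> x = Max ((\<lambda>i. viol A b i x) ` \<tau>)"

lemma fobj_avg: "fobj A b \<beta> x = avg (samples \<beta>) (\<lambda>\<tau>. (1/2) * (Mx A b \<tau> x)^2)"
  unfolding fobj_def avg_def Mx_def by simp

lemma core:
  fixes q d Y X Pp B :: real
  assumes "0 \<le> q" "q \<le> 1" "0 < d" "Pp \<le> B"
  shows "-2*d*(max 0 (Y-B))*(Y - q*X - (1-q)*Pp) + d^2*(max 0 (Y-B))^2
     \<le> -d*(2*(1-q) - q*(d-1) - d)*(max 0 (Y-B))^2 + d*q/(1+d)*(max 0 (X-B))^2"
proof (cases "Y \<le> B")
  case True
  then have "max 0 (Y-B) = 0" by simp
  then show ?thesis using assms by simp
next
  case False
  define r where "r = Y - B"
  define t0 where "t0 = max 0 (X - B)"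
  have r: "max 0 (Y-B) = r" "r > 0" using False r_def by auto
  have s0: "t0 \<ge> 0" "X - B \<le> t0" unfolding t0_def by auto
  have h1: "(1-q)*r*(Y - Pp) \<ge> (1-q)*r*r"
    using assms r_def r by (intro mult_left_mono) auto
  have h2: "r*(X - Y) \<le> r*t0 - r*r"
    using s0 r r_def by (smt (verit) mult_left_mono right_diff_distrib)
  have h3: "r*t0 \<le> t0^2/(2*(1+d)) + (1+d)*r^2/2"
  proof -
    have "0 \<le> (t0 - (1+d)*r)^2" by simp
    then have "2*(1+d)*(r*t0) \<le> t0^2 + (1+d)^2*r^2" by (simp add: power2_eq_square algebra_simps)
    then show ?thesis using assms by (simp add: field_simps power2_eq_square)
  qed
  have key: "-(r*(Y - q*X - (1-q)*Pp)) \<le> -(1-q)*r^2 + q*(t0^2/(2*(1+d))) + q*(d-1)*r^2/2"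
  proof -
    have "-(r*(Y - q*X - (1-q)*Pp)) = -((1-q)*r*(Y-Pp)) + q*(r*(X-Y))" by (simp add: algebra_simps)
    also have "\<dots> \<le> -((1-q)*r*r) + q*(r*t0 - r*r)"
      using h1 h2 assms by (smt (verit) mult_left_mono)
    also have "\<dots> \<le> -((1-q)*r*r) + q*(t0^2/(2*(1+d)) + (1+d)*r^2/2 - r*r)"
      using h3 assms by (smt (verit) mult_left_mono)
    finally show ?thesis by (simp add: power2_eq_square field_simps)
  qed
  have "-2*d*r*(Y - q*X - (1-q)*Pp) \<le> 2*d*(-(1-q)*r^2 + q*(t0^2/(2*(1+d))) + q*(d-1)*r^2/2)"
    using mult_left_mono[OF key, of "2*d"] assms by (simp add: algebra_simps)
  then show ?thesis unfolding r t0_def[symmetric] using assms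
    by (simp add: field_simps power2_eq_square)
qed

lemma core0:
  fixes q d Y Pp B :: real
  assumes "0 \<le> q" "q \<le> 1" "0 < d" "Pp \<le> B"
  shows "-2*d*(max 0 (Y-B))*(Y - q*Y - (1-q)*Pp) + d^2*(max 0 (Y-B))^2
     \<le> -d*(2*(1-q) - d)*(max 0 (Y-B))^2"
proof (cases "Y \<le> B")
  case True
  then show ?thesis by simp
next
  case False
  define r where "r = Y - B"
  have r: "max 0 (Y-B) = r" "r > 0" using False r_def by auto
  have h1: "(1-q)*r*(Y - Pp) \<ge> (1-q)*r*r"
    using assms r_def r by (intro mult_left_mono) auto
  have "Y - q*Y - (1-q)*Pp = (1-q)*(Y-Pp)" by (simp add: algebra_simps)
  moreover have "2*d*((1-q)*r*r) \<le> 2*d*((1-q)*r*(Y-Pp))"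
    by (rule mult_left_mono[OF h1]) (use assms in auto)
  ultimately have "-2*d*r*(Y - q*Y - (1-q)*Pp) \<le> -2*d*((1-q)*r*r)"
    by (simp add: algebra_simps)
  then show ?thesis unfolding r by (simp add: algebra_simps power2_eq_square)
qed



locale pk =
  fixes A :: "real^'n^('m::finite)" and b :: "real^'m" and sel :: "'m set \<Rightarrow> real^'n \<Rightarrow> 'm"
    and \<beta> :: nat and \<alpha> \<omega> \<delta> \<gamma> :: real and p :: "real^'n"
  assumes rows: "\<And>i. norm (A$i) = 1"
    and beta: "1 \<le> \<beta>" "\<beta> \<le> CARD('m)"
    and sel: "\<And>\<tau> y. \<tau> \<in> samples \<beta> \<Longrightarrow>
                 sel \<tau> y \<in> \<tau> \<and> (\<forall>i\<in>\<tau>. viol A b i y \<le> viol A b (sel \<tau> y) y)"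
    and alpha: "0 \<le> 1 - \<alpha>" "1 - \<alpha> < 1"
    and omega: "0 \<le> \<omega>" "\<omega> < 1"
    and delta: "0 < \<delta>"
    and gamma: "\<alpha> * \<gamma> = \<alpha> * \<delta> + \<omega> * \<delta> * (1 - \<alpha>)"
    and pin: "p \<in> feas_set A b"
begin

definition "stp \<tau> s = paskm_step A b sel \<alpha> \<omega> \<delta> \<gamma> \<tau> s"
definition Yv :: "((real^'n) \<times> (real^'n)) \<Rightarrow> real^'n" where "Yv s = \<alpha> *\<^sub>R snd s + (1-\<alpha>) *\<^sub>R fst s"
definition "Zf s = \<alpha> *\<^sub>R snd s + ((1-\<omega>)*(1-\<alpha>)) *\<^sub>R fst s - (1 - \<omega>*(1-\<alpha>)) *\<^sub>R p"
definition "Phi s = (norm (Zf s))^2"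
abbreviation "ff x \<equiv> fobj A b \<beta> x"
abbreviation "q \<equiv> \<omega>*(1-\<alpha>)"

lemma q_bounds: "0 \<le> q" "q \<le> 1"
  using alpha omega by (auto intro: mult_nonneg_nonneg mult_le_one)

lemma tau: "\<tau> \<in> samples \<beta> \<Longrightarrow> finite \<tau> \<and> \<tau> \<noteq> {}"
  using beta unfolding samples_def by auto

lemma viol_nonneg: "0 \<le> viol A b i x" unfolding viol_def by simp

lemma viol_le_Mx: "\<tau> \<in> samples \<beta> \<Longrightarrow> i \<in> \<tau> \<Longrightarrow> viol A b i x \<le> Mx A b \<tau> x"
  unfolding Mx_def using tau by (intro Max_ge) auto

lemma Mx_nonneg: "\<tau> \<in> samples \<beta> \<Longrightarrow> 0 \<le> Mx A b \<tau> x"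
  using tau viol_le_Mx viol_nonneg by (metis all_not_in_conv order_trans)

lemma sel_Mx: "\<tau> \<in> samples \<beta> \<Longrightarrow> viol A b (sel \<tau> y) y = Mx A b \<tau> y"
  unfolding Mx_def using tau sel by (intro Max_eqI[symmetric]) auto

lemma avg_r2: "avg (samples \<beta>) (\<lambda>\<tau>. (viol A b (sel \<tau> y) y)^2) = 2 * ff y"
proof -
  have "avg (samples \<beta>) (\<lambda>\<tau>. (viol A b (sel \<tau> y) y)^2) = avg (samples \<beta>) (\<lambda>\<tau>. 2 * ((1/2) * (Mx A b \<tau> y)^2))"
    by (rule avg_cong) (simp add: sel_Mx)
  then show ?thesis unfolding fobj_avg avg_cmult by simp
qed

lemma avg_M2: "avg (samples \<beta>) (\<lambda>\<tau>. (Mx A b \<tau> x)^2) = 2 * ff x"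
  unfolding fobj_avg avg_cmult[symmetric] by simp

lemma ff_nonneg: "0 \<le> ff x"
  unfolding fobj_avg by (rule avg_nonneg) simp

lemma Zf_step:
  "Zf (stp \<tau> s) = Zf s - (\<delta> * viol A b (sel \<tau> (Yv s)) (Yv s)) *\<^sub>R (A $ sel \<tau> (Yv s))"
proof -
  obtain x v where s: "s = (x,v)" by force
  define y where "y = Yv s"
  define i where "i = sel \<tau> y"
  define r where "r = viol A b i y"
  have y: "y = \<alpha> *\<^sub>R v + (1-\<alpha>) *\<^sub>R x" unfolding y_def Yv_def s by simp
  have st: "stp \<tau> s = (y - (\<delta>*r) *\<^sub>R A$i, \<omega> *\<^sub>R v + (1-\<omega>) *\<^sub>R y - (\<gamma>*r) *\<^sub>R A$i)"
    unfolding stp_def paskm_step_def s Let_def y i_def r_def y_def Yv_def by simp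
  have g: "\<alpha>*(\<gamma>*r) + (1-\<omega>)*(1-\<alpha>)*(\<delta>*r) = \<delta>*r"
  proof -
    have "\<alpha>*(\<gamma>*r) + (1-\<omega>)*(1-\<alpha>)*(\<delta>*r) = (\<alpha>*\<gamma> + (1-\<omega>)*(1-\<alpha>)*\<delta>)*r"
      by (simp add: algebra_simps)
    also have "\<alpha>*\<gamma> + (1-\<omega>)*(1-\<alpha>)*\<delta> = \<delta>" using gamma by (simp add: algebra_simps)
    finally show ?thesis by simp
  qed
  have "Zf (stp \<tau> s) = \<alpha> *\<^sub>R v + ((1-\<omega>)*(1-\<alpha>)) *\<^sub>R x - (1 - \<omega>*(1-\<alpha>)) *\<^sub>R p
      - (\<alpha>*(\<gamma>*r) + (1-\<omega>)*(1-\<alpha>)*(\<delta>*r)) *\<^sub>R A$i"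
    unfolding Zf_def st y vec_eq_iff by (simp add: algebra_simps)
  also have "\<dots> = Zf s - (\<delta>*r) *\<^sub>R A$i" unfolding g Zf_def s by simp
  finally show ?thesis unfolding r_def i_def y_def .
qed

lemma samp_fin_ne: "finite (samples \<beta> :: 'm set set)" "samples \<beta> \<noteq> ({} :: 'm set set)"
  using samples_ne beta by auto

lemma Phi_expand:
  "Phi (stp \<tau> s) = Phi s - 2*\<delta>*(viol A b (sel \<tau> (Yv s)) (Yv s))*((A $ sel \<tau> (Yv s)) \<bullet> Zf s)
     + \<delta>^2*(viol A b (sel \<tau> (Yv s)) (Yv s))^2"
proof -
  define a where "a = A $ sel \<tau> (Yv s)"
  define r where "r = viol A b (sel \<tau> (Yv s)) (Yv s)"
  have aa: "a \<bullet> a = 1" using rows[of "sel \<tau> (Yv s)"] unfolding a_def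
    by (metis power2_norm_eq_inner power_one)
  have "Phi (stp \<tau> s) = (Zf s - (\<delta>*r) *\<^sub>R a) \<bullet> (Zf s - (\<delta>*r) *\<^sub>R a)"
    unfolding Phi_def Zf_step power2_norm_eq_inner a_def r_def ..
  also have "\<dots> = Zf s \<bullet> Zf s - 2*\<delta>*r*(a \<bullet> Zf s) + (\<delta>*r)^2*(a \<bullet> a)"
    by (simp add: inner_diff_left inner_diff_right inner_commute algebra_simps power2_eq_square)
  also have "\<dots> = Phi s - 2*\<delta>*r*(a \<bullet> Zf s) + \<delta>^2*r^2"
    unfolding aa Phi_def power2_norm_eq_inner by (simp add: power_mult_distrib)
  finally show ?thesis unfolding a_def r_def .
qed

lemma a_Zf: "a \<bullet> Zf s = a \<bullet> Yv s - q*(a \<bullet> fst s) - (1-q)*(a \<bullet> p)"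
  unfolding Zf_def Yv_def by (simp add: inner_diff_right inner_add_right algebra_simps)

lemma pin_le: "A$i \<bullet> p \<le> b$i" using pin unfolding feas_set_def by auto

lemma step_gen:
  assumes "\<tau> \<in> samples \<beta>"
  shows "Phi (stp \<tau> s) \<le> Phi s - \<delta>*(2*(1-q) - q*(\<delta>-1) - \<delta>)*(viol A b (sel \<tau> (Yv s)) (Yv s))^2
     + \<delta>*q/(1+\<delta>)*(Mx A b \<tau> (fst s))^2"
proof -
  define i where "i = sel \<tau> (Yv s)"
  have c: "-2*\<delta>*(max 0 (A$i \<bullet> Yv s - b$i))*(A$i \<bullet> Yv s - q*(A$i \<bullet> fst s) - (1-q)*(A$i \<bullet> p))
      + \<delta>^2*(max 0 (A$i \<bullet> Yv s - b$i))^2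
     \<le> -\<delta>*(2*(1-q) - q*(\<delta>-1) - \<delta>)*(max 0 (A$i \<bullet> Yv s - b$i))^2
       + \<delta>*q/(1+\<delta>)*(max 0 (A$i \<bullet> fst s - b$i))^2"
    by (rule core) (use q_bounds delta pin_le in auto)
  have "(max 0 (A$i \<bullet> fst s - b$i))^2 \<le> (Mx A b \<tau> (fst s))^2"
    using viol_le_Mx[OF assms, of i "fst s"] sel[OF assms] unfolding i_def viol_def
    by (intro power_mono) auto
  then have "\<delta>*q/(1+\<delta>)*(max 0 (A$i \<bullet> fst s - b$i))^2 \<le> \<delta>*q/(1+\<delta>)*(Mx A b \<tau> (fst s))^2"
    using q_bounds delta by (intro mult_left_mono) auto
  with c show ?thesis unfolding Phi_expand a_Zf i_def[symmetric] viol_def by linarith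
qed

lemma Yv_diag: "fst s = snd s \<Longrightarrow> Yv s = fst s"
proof -
  assume "fst s = snd s"
  then show ?thesis unfolding Yv_def using scaleR_collapse[of \<alpha> "snd s"] by (simp add: add.commute)
qed

lemma step_0:
  assumes "\<tau> \<in> samples \<beta>" "fst s = snd s"
  shows "Phi (stp \<tau> s) \<le> Phi s - \<delta>*(2*(1-q) - \<delta>)*(viol A b (sel \<tau> (Yv s)) (Yv s))^2"
proof -
  define i where "i = sel \<tau> (Yv s)"
  have c: "-2*\<delta>*(max 0 (A$i \<bullet> Yv s - b$i))*(A$i \<bullet> Yv s - q*(A$i \<bullet> Yv s) - (1-q)*(A$i \<bullet> p))
      + \<delta>^2*(max 0 (A$i \<bullet> Yv s - b$i))^2
     \<le> -\<delta>*(2*(1-q) - \<delta>)*(max 0 (A$i \<bullet> Yv s - b$i))^2"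
    by (rule core0) (use q_bounds delta pin_le in auto)
  have "fst s = Yv s" using Yv_diag[OF assms(2)] by simp
  with c show ?thesis unfolding Phi_expand a_Zf i_def[symmetric] viol_def by simp
qed

lemma E_gen:
  "avg (samples \<beta>) (\<lambda>\<tau>. Phi (stp \<tau> s)) \<le> Phi s - \<delta>*(2*(1-q) - q*(\<delta>-1) - \<delta>)*(2*ff (Yv s))
     + \<delta>*q/(1+\<delta>)*(2*ff (fst s))"
proof -
  have "avg (samples \<beta>) (\<lambda>\<tau>. Phi (stp \<tau> s)) \<le> avg (samples \<beta>) (\<lambda>\<tau>. Phi s - \<delta>*(2*(1-q) - q*(\<delta>-1) - \<delta>)*(viol A b (sel \<tau> (Yv s)) (Yv s))^2
     + \<delta>*q/(1+\<delta>)*(Mx A b \<tau> (fst s))^2)"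
    by (rule avg_mono) (rule step_gen)
  also have "\<dots> = Phi s - \<delta>*(2*(1-q) - q*(\<delta>-1) - \<delta>)*(2*ff (Yv s)) + \<delta>*q/(1+\<delta>)*(2*ff (fst s))"
    unfolding avg_add avg_diff avg_cmult avg_const[OF samp_fin_ne] avg_r2 avg_M2 ..
  finally show ?thesis .
qed

lemma E_0:
  assumes "fst s = snd s"
  shows "avg (samples \<beta>) (\<lambda>\<tau>. Phi (stp \<tau> s)) \<le> Phi s - \<delta>*(2*(1-q) - \<delta>)*(2*ff (Yv s))"
proof -
  have "avg (samples \<beta>) (\<lambda>\<tau>. Phi (stp \<tau> s)) \<le> avg (samples \<beta>) (\<lambda>\<tau>. Phi s - \<delta>*(2*(1-q) - \<delta>)*(viol A b (sel \<tau> (Yv s)) (Yv s))^2)"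
    by (rule avg_mono) (rule step_0[OF _ assms])
  also have "\<dots> = Phi s - \<delta>*(2*(1-q) - \<delta>)*(2*ff (Yv s))"
    unfolding avg_add avg_diff avg_cmult avg_const[OF samp_fin_ne] avg_r2 ..
  finally show ?thesis .
qed

lemma fst_stp: "fst (stp \<tau> s) = Yv s - (\<delta> * viol A b (sel \<tau> (Yv s)) (Yv s)) *\<^sub>R A $ sel \<tau> (Yv s)"
  unfolding stp_def paskm_step_def Yv_def Let_def by simp

lemma inner_rows: "-1 \<le> A$j \<bullet> A$i"
  using Cauchy_Schwarz_ineq2[of "A$j" "A$i"] rows by (simp add: abs_le_iff)

lemma Mx_step:
  assumes "\<tau> \<in> samples \<beta>" "\<tau>' \<in> samples \<beta>"
  shows "Mx A b \<tau>' (fst (stp \<tau> s)) \<le> Mx A b \<tau>' (Yv s) + \<delta> * viol A b (sel \<tau> (Yv s)) (Yv s)"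
proof -
  define i where "i = sel \<tau> (Yv s)"
  define r where "r = viol A b i (Yv s)"
  have r0: "0 \<le> \<delta>*r" using delta viol_nonneg unfolding r_def by simp
  have "viol A b j (fst (stp \<tau> s)) \<le> Mx A b \<tau>' (Yv s) + \<delta>*r" if j: "j \<in> \<tau>'" for j
  proof -
    have e: "A$j \<bullet> fst (stp \<tau> s) = A$j \<bullet> Yv s - (\<delta>*r)*(A$j \<bullet> A$i)"
      unfolding fst_stp i_def[symmetric] r_def[symmetric] by (simp add: inner_diff_right)
    have "-(\<delta>*r)*(A$j \<bullet> A$i) \<le> \<delta>*r"
      using mult_left_mono[OF inner_rows[of j i] r0] by simp
    then have "viol A b j (fst (stp \<tau> s)) \<le> viol A b j (Yv s) + \<delta>*r"
      unfolding viol_def e using r0 by (simp add: max_def)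
    then show ?thesis using viol_le_Mx[OF assms(2) j, of "Yv s"] by linarith
  qed
  then show ?thesis unfolding Mx_def[of A b \<tau>' "fst (stp \<tau> s)"] r_def i_def using tau[OF assms(2)]
    by (subst Max_le_iff) auto
qed

lemma ff_step:
  assumes "\<tau> \<in> samples \<beta>"
  shows "ff (fst (stp \<tau> s)) \<le> (1+\<delta>)*ff (Yv s) + (1+\<delta>)*\<delta>/2*(viol A b (sel \<tau> (Yv s)) (Yv s))^2"
proof -
  define r where "r = viol A b (sel \<tau> (Yv s)) (Yv s)"
  have pw: "(1/2)*(Mx A b \<tau>' (fst (stp \<tau> s)))^2 \<le> (1+\<delta>)*((1/2)*(Mx A b \<tau>' (Yv s))^2) + (1+\<delta>)*\<delta>/2*r^2"
    if t: "\<tau>' \<in> samples \<beta>" for \<tau>'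
  proof -
    define M where "M = Mx A b \<tau>' (Yv s)"
    have "(Mx A b \<tau>' (fst (stp \<tau> s)))^2 \<le> (M + \<delta>*r)^2"
      using Mx_step[OF assms t] Mx_nonneg[OF t] unfolding M_def r_def by (intro power_mono) auto
    also have "\<dots> \<le> (1+\<delta>)*(M^2 + \<delta>*r^2)"
    proof -
      have "0 \<le> \<delta>*(M-r)^2" using delta by simp
      then show ?thesis by (simp add: algebra_simps power2_eq_square)
    qed
    finally show ?thesis by (simp add: M_def field_simps)
  qed
  have "ff (fst (stp \<tau> s)) \<le> avg (samples \<beta>) (\<lambda>\<tau>'. (1+\<delta>)*((1/2)*(Mx A b \<tau>' (Yv s))^2) + (1+\<delta>)*\<delta>/2*r^2)"
    unfolding fobj_avg[of A b \<beta> "fst (stp \<tau> s)"] by (rule avg_mono) (rule pw)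
  also have "\<dots> = (1+\<delta>)*ff (Yv s) + (1+\<delta>)*\<delta>/2*r^2"
    unfolding avg_add avg_cmult avg_const[OF samp_fin_ne] fobj_avg ..
  finally show ?thesis unfolding r_def .
qed

lemma E_B: "avg (samples \<beta>) (\<lambda>\<tau>. ff (fst (stp \<tau> s))) \<le> (1+\<delta>)^2 * ff (Yv s)"
proof -
  have "avg (samples \<beta>) (\<lambda>\<tau>. ff (fst (stp \<tau> s))) \<le>
        avg (samples \<beta>) (\<lambda>\<tau>. (1+\<delta>)*ff (Yv s) + (1+\<delta>)*\<delta>/2*(viol A b (sel \<tau> (Yv s)) (Yv s))^2)"
    by (rule avg_mono) (rule ff_step)
  also have "\<dots> = (1+\<delta>)*ff (Yv s) + (1+\<delta>)*\<delta>/2*(2*ff (Yv s))"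
    unfolding avg_add avg_cmult avg_const[OF samp_fin_ne] avg_r2 ..
  also have "\<dots> = (1+\<delta>)^2 * ff (Yv s)" by (simp add: algebra_simps power2_eq_square)
  finally show ?thesis .
qed

end


lemma avg_sum: "avg X (\<lambda>x. \<Sum>l\<in>L. G l x) = (\<Sum>l\<in>L. avg X (G l))"
  unfolding avg_def by (simp add: sum.swap[of _ X] sum_divide_distrib)

lemma avg_single: "avg {a} F = F a" unfolding avg_def by simp

lemma seqs_0: "sample_seqs \<beta> 0 = {[]}" unfolding sample_seqs_def by auto

context pk
begin

definition "St x0 ts = fold stp ts (x0, x0)"
definition "aa x0 l = avg (sample_seqs \<beta> l) (\<lambda>ts. Phi (St x0 ts))"
definition "Fy x0 l = avg (sample_seqs \<beta> l) (\<lambda>ts. ff (Yv (St x0 ts)))"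
definition "Gx x0 l = avg (sample_seqs \<beta> l) (\<lambda>ts. ff (fst (St x0 ts)))"

lemma St_snoc: "St x0 (ts @ [t]) = stp t (St x0 ts)" unfolding St_def by simp

lemma St_Nil: "St x0 [] = (x0, x0)" unfolding St_def by simp

lemma stp_eq: "stp = paskm_step A b sel \<alpha> \<omega> \<delta> \<gamma>" by (intro ext) (simp add: stp_def)

lemma paskm_y_St: "paskm_y A b sel \<alpha> \<omega> \<delta> \<gamma> x0 ts = Yv (St x0 ts)"
  unfolding paskm_y_def Yv_def St_def stp_eq Let_def ..

lemma a_Suc: "aa x0 (Suc l) \<le> aa x0 l - \<delta>*(2*(1-q) - q*(\<delta>-1) - \<delta>)*(2*Fy x0 l) + \<delta>*q/(1+\<delta>)*(2*Gx x0 l)"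
proof -
  have "aa x0 (Suc l) = avg (sample_seqs \<beta> l) (\<lambda>ts. avg (samples \<beta>) (\<lambda>t. Phi (stp t (St x0 ts))))"
    unfolding aa_def avg_Suc St_snoc ..
  also have "\<dots> \<le> avg (sample_seqs \<beta> l) (\<lambda>ts. Phi (St x0 ts) - \<delta>*(2*(1-q) - q*(\<delta>-1) - \<delta>)*(2*ff (Yv (St x0 ts)))
     + \<delta>*q/(1+\<delta>)*(2*ff (fst (St x0 ts))))"
    by (rule avg_mono) (rule E_gen)
  also have "\<dots> = aa x0 l - \<delta>*(2*(1-q) - q*(\<delta>-1) - \<delta>)*(2*Fy x0 l) + \<delta>*q/(1+\<delta>)*(2*Gx x0 l)"
    unfolding avg_add avg_diff avg_cmult aa_def Fy_def Gx_def ..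
  finally show ?thesis .
qed

lemma a_1: "aa x0 (Suc 0) \<le> aa x0 0 - \<delta>*(2*(1-q) - \<delta>)*(2*Fy x0 0)"
proof -
  have "aa x0 (Suc 0) = avg (sample_seqs \<beta> 0) (\<lambda>ts. avg (samples \<beta>) (\<lambda>t. Phi (stp t (St x0 ts))))"
    unfolding aa_def avg_Suc St_snoc ..
  also have "\<dots> \<le> avg (sample_seqs \<beta> 0) (\<lambda>ts. Phi (St x0 ts) - \<delta>*(2*(1-q) - \<delta>)*(2*ff (Yv (St x0 ts))))"
    by (rule avg_mono) (rule E_0, simp add: seqs_0 St_Nil)
  also have "\<dots> = aa x0 0 - \<delta>*(2*(1-q) - \<delta>)*(2*Fy x0 0)"
    unfolding avg_diff avg_cmult aa_def Fy_def ..
  finally show ?thesis .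
qed

lemma G_Suc: "Gx x0 (Suc l) \<le> (1+\<delta>)^2 * Fy x0 l"
proof -
  have "Gx x0 (Suc l) = avg (sample_seqs \<beta> l) (\<lambda>ts. avg (samples \<beta>) (\<lambda>t. ff (fst (stp t (St x0 ts)))))"
    unfolding Gx_def avg_Suc St_snoc ..
  also have "\<dots> \<le> avg (sample_seqs \<beta> l) (\<lambda>ts. (1+\<delta>)^2 * ff (Yv (St x0 ts)))"
    by (rule avg_mono) (rule E_B)
  finally show ?thesis unfolding avg_cmult Fy_def .
qed

lemma a0: "aa x0 0 = (1-q)^2 * (norm (x0 - p))^2"
proof -
  have "Zf (x0,x0) = (\<alpha> + (1-\<omega>)*(1-\<alpha>)) *\<^sub>R x0 - (1-q) *\<^sub>R p"
    unfolding Zf_def by (simp add: scaleR_left_distrib)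
  also have "\<alpha> + (1-\<omega>)*(1-\<alpha>) = 1 - q" by (simp add: algebra_simps)
  finally have "Zf (x0,x0) = (1-q) *\<^sub>R (x0 - p)" by (simp add: scaleR_right_diff_distrib)
  then show ?thesis unfolding aa_def seqs_0 avg_single St_Nil Phi_def
    by (simp add: power_mult_distrib)
qed

lemma F0: "Fy x0 0 = ff x0"
  unfolding Fy_def seqs_0 avg_single St_Nil using Yv_diag[of "(x0,x0)"] by simp

lemma a_nonneg: "0 \<le> aa x0 l" unfolding aa_def Phi_def by (rule avg_nonneg) simp
lemma Fy_nonneg: "0 \<le> Fy x0 l" unfolding Fy_def by (rule avg_nonneg) (rule ff_nonneg)

lemma telescope:
  defines "D \<equiv> 2*(1-q) - \<delta> - 2*q*\<delta>"
  shows "aa x0 (Suc j) + 2*\<delta>*q*(1+\<delta>)*Fy x0 j + 2*\<delta>*D*(\<Sum>l=1..j. Fy x0 l)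
         \<le> aa x0 0 - 2*\<delta>*(D + q*\<delta> - q)*Fy x0 0"
proof (induction j)
  case 0
  have "aa x0 0 - \<delta>*(2*(1-q) - \<delta>)*(2*Fy x0 0) + 2*\<delta>*q*(1+\<delta>)*Fy x0 0 = aa x0 0 - 2*\<delta>*(D + q*\<delta> - q)*Fy x0 0"
    unfolding D_def by (simp add: algebra_simps)
  then show ?case using a_1[of x0] by simp
next
  case (Suc j)
  have g: "\<delta>*q/(1+\<delta>)*(2*Gx x0 (Suc j)) \<le> \<delta>*q/(1+\<delta>)*(2*((1+\<delta>)^2 * Fy x0 j))"
    using G_Suc[of x0 j] delta q_bounds by (intro mult_left_mono) auto
  have e1: "\<delta>*q/(1+\<delta>)*(2*((1+\<delta>)^2 * Fy x0 j)) = 2*\<delta>*q*(1+\<delta>)*Fy x0 j"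
    using delta by (simp add: field_simps power2_eq_square)
  have e2: "\<delta>*(2*(1-q) - q*(\<delta>-1) - \<delta>)*(2*Fy x0 (Suc j)) = 2*\<delta>*D*Fy x0 (Suc j) + 2*\<delta>*q*(1+\<delta>)*Fy x0 (Suc j)"
    unfolding D_def by (simp add: algebra_simps)
  have e3: "2*\<delta>*D*(\<Sum>l=1..Suc j. Fy x0 l) = 2*\<delta>*D*(\<Sum>l=1..j. Fy x0 l) + 2*\<delta>*D*Fy x0 (Suc j)"
    by (simp add: algebra_simps)
  show ?case using a_Suc[of x0 "Suc j"] g e1 e2 e3 Suc.IH by linarith
qed

lemma sum_bound:
  defines "D \<equiv> 2*(1-q) - \<delta> - 2*q*\<delta>"
  shows "2*\<delta>*D*(\<Sum>l=1..k. Fy x0 l) \<le> (1-q)^2 * (norm (x0 - p))^2 - 2*\<delta>*(D + q*\<delta> - q)*ff x0"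
proof -
  have "0 \<le> 2*\<delta>*q*(1+\<delta>)*Fy x0 k"
    using delta q_bounds Fy_nonneg by simp
  then show ?thesis using telescope[of x0 k] a_nonneg[of x0 "Suc k"] unfolding D_def a0 F0 by linarith
qed

end


context pk
begin

lemma Mx_avg:
  assumes "1 \<le> k" "\<tau> \<in> samples \<beta>"
  shows "Mx A b \<tau> ((1/real k) *\<^sub>R (\<Sum>l=1..k. ys l)) \<le> (1/real k) * (\<Sum>l=1..k. Mx A b \<tau> (ys l))"
proof -
  have kpos: "0 < real k" using assms by simp
  have "viol A b j ((1/real k) *\<^sub>R (\<Sum>l=1..k. ys l)) \<le> (1/real k) * (\<Sum>l=1..k. Mx A b \<tau> (ys l))"
    if j: "j \<in> \<tau>" for j
  proof -
    have "A$j \<bullet> ((1/real k) *\<^sub>R (\<Sum>l=1..k. ys l)) - b$j = (1/real k) * (\<Sum>l=1..k. (A$j \<bullet> ys l - b$j))"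
      using kpos by (simp add: inner_sum_right sum_subtractf field_simps)
    also have "\<dots> \<le> (1/real k) * (\<Sum>l=1..k. Mx A b \<tau> (ys l))"
    proof (rule mult_left_mono)
      show "(\<Sum>l=1..k. (A$j \<bullet> ys l - b$j)) \<le> (\<Sum>l=1..k. Mx A b \<tau> (ys l))"
      proof (rule sum_mono)
        fix l
        have "A$j \<bullet> ys l - b$j \<le> viol A b j (ys l)" unfolding viol_def by simp
        then show "A$j \<bullet> ys l - b$j \<le> Mx A b \<tau> (ys l)" using viol_le_Mx[OF assms(2) j] by (meson order_trans)
      qed
    qed simp
    finally show ?thesis
      unfolding viol_def using Mx_nonneg[OF assms(2)] kpos
      by (simp add: sum_nonneg)
  qed
  then show ?thesis unfolding Mx_def[of A b \<tau> "(1/real k) *\<^sub>R (\<Sum>l=1..k. ys l)"] using tau[OF assms(2)]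
    by (subst Max_le_iff) auto
qed

lemma sq_avg:
  assumes "1 \<le> k"
  shows "((1/real k) * (\<Sum>l=1..k. m l))^2 \<le> (1/real k) * (\<Sum>l=1..k. (m l)^2)"
proof -
  have "power2 (\<Sum>l\<in>{1..k}. (1/real k) *\<^sub>R m l) \<le> (\<Sum>l\<in>{1..k}. (1/real k) * power2 (m l))"
    by (rule convex_on_sum[OF _ _ convex_power2]) (use assms in auto)
  then show ?thesis by (simp add: sum_distrib_left)
qed

lemma jensen:
  assumes "1 \<le> k"
  shows "ff ((1/real k) *\<^sub>R (\<Sum>l=1..k. ys l)) \<le> (1/real k) * (\<Sum>l=1..k. ff (ys l))"
proof -
  have "ff ((1/real k) *\<^sub>R (\<Sum>l=1..k. ys l)) \<le>
        avg (samples \<beta>) (\<lambda>\<tau>. (1/real k) * (\<Sum>l=1..k. (1/2) * (Mx A b \<tau> (ys l))^2))"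
    unfolding fobj_avg[of A b \<beta> "(1/real k) *\<^sub>R (\<Sum>l=1..k. ys l)"]
  proof (rule avg_mono)
    fix \<tau> :: "'m set" assume t: "\<tau> \<in> samples \<beta>"
    have "(Mx A b \<tau> ((1/real k) *\<^sub>R (\<Sum>l=1..k. ys l)))^2 \<le> ((1/real k) * (\<Sum>l=1..k. Mx A b \<tau> (ys l)))^2"
      using Mx_avg[OF assms t] Mx_nonneg[OF t] by (intro power_mono) auto
    also have "\<dots> \<le> (1/real k) * (\<Sum>l=1..k. (Mx A b \<tau> (ys l))^2)" by (rule sq_avg[OF assms])
    finally show "(1/2) * (Mx A b \<tau> ((1/real k) *\<^sub>R (\<Sum>l=1..k. ys l)))^2
        \<le> (1/real k) * (\<Sum>l=1..k. (1/2) * (Mx A b \<tau> (ys l))^2)"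
      by (simp add: sum_distrib_left[symmetric] sum_divide_distrib[symmetric])
  qed
  also have "\<dots> = (1/real k) * (\<Sum>l=1..k. ff (ys l))"
    unfolding avg_cmult avg_sum fobj_avg ..
  finally show ?thesis .
qed

end


theorem theorem9:
  fixes A :: "real^'n^('m::finite)" and b :: "real^'m" and x0 :: "real^'n"
    and sel :: "'m set \<Rightarrow> real^'n \<Rightarrow> 'm"
    and \<beta> k :: nat and \<alpha> \<omega> \<delta> \<gamma> :: real
  assumes rows: "\<And>i. norm (A$i) = 1"
    and consistent: "feas_set A b \<noteq> {}"
    and beta: "1 \<le> \<beta>" "\<beta> \<le> CARD('m)"
    and sel: "\<And>\<tau> y. \<tau> \<in> samples \<beta> \<Longrightarrow>
                 sel \<tau> y \<in> \<tau> \<and> (\<forall>i\<in>\<tau>. viol A b i y \<le> viol A b (sel \<tau> y) y)"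
    and alpha: "0 \<le> 1 - \<alpha>" "1 - \<alpha> < 1"
    and omega: "0 \<le> \<omega>" "\<omega> < 1"
    and delta: "0 < \<delta>" "\<delta> < 2 * (1 - \<omega> + \<alpha> * \<omega>) / (1 + 2 * \<omega> - 2 * \<alpha> * \<omega>)"
    and gamma: "\<alpha> * \<gamma> = \<alpha> * \<delta> + \<omega> * \<delta> * (1 - \<alpha>)"
    and k: "1 \<le> k"
  shows "expect_seqs \<beta> k (\<lambda>ts. fobj A b \<beta> (paskm_ybar A b sel \<alpha> \<omega> \<delta> \<gamma> x0 ts))
     \<le> ((1 - \<omega> + \<alpha> * \<omega>)^2 * (infdist x0 (feas_set A b))^2
         + 2 * \<delta> * (\<delta> - 2 + 3 * \<omega> - 3 * \<alpha> * \<omega> + \<delta> * \<omega> - \<delta> * \<alpha> * \<omega>) * fobj A b \<beta> x0)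
       / (2 * \<delta> * real k * (2 - 2 * \<omega> + 2 * \<alpha> * \<omega> - 2 * \<delta> * \<omega> + 2 * \<delta> * \<alpha> * \<omega> - \<delta>))"
proof -
  note delta_assm = delta
  have fe: "feas_set A b = (\<Inter>i. {x. A$i \<bullet> x \<le> b$i})" unfolding feas_set_def by auto
  have closed: "closed (feas_set A b)" unfolding fe by (intro closed_INT ballI closed_halfspace_le)
  obtain p where pP: "p \<in> feas_set A b" and pd: "infdist x0 (feas_set A b) = dist x0 p"
    using infdist_attains_inf[OF closed consistent] by blast
  interpret pk A b sel \<beta> \<alpha> \<omega> \<delta> \<gamma> p
    by unfold_locales (use rows beta sel alpha omega delta gamma pP in auto)
  define qq where "qq = \<omega>*(1-\<alpha>)"
  define D where "D = 2*(1-\<omega>*(1-\<alpha>)) - \<delta> - 2*(\<omega>*(1-\<alpha>))*\<delta>"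
  have q0: "0 \<le> qq" using alpha omega unfolding qq_def by simp
  have Dpos: "0 < D"
  proof -
    have den: "0 < 1 + 2 * \<omega> - 2 * \<alpha> * \<omega>" using q0 unfolding qq_def by (simp add: algebra_simps)
    have "\<delta> * (1 + 2 * \<omega> - 2 * \<alpha> * \<omega>) < 2 * (1 - \<omega> + \<alpha> * \<omega>)"
      using delta_assm(2) den by (simp add: pos_less_divide_eq)
    then show ?thesis unfolding D_def by (simp add: algebra_simps)
  qed
  define N where "N = (1 - \<omega>*(1-\<alpha>))^2 * (norm (x0 - p))^2
      - 2*\<delta>*((2*(1-\<omega>*(1-\<alpha>)) - \<delta> - 2*(\<omega>*(1-\<alpha>))*\<delta>) + \<omega>*(1-\<alpha>)*\<delta> - \<omega>*(1-\<alpha>))*fobj A b \<beta> x0"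
  have S: "2*\<delta>*D*(\<Sum>l=1..k. Fy x0 l) \<le> N"
    unfolding D_def N_def by (rule sum_bound)
  have kpos: "0 < real k" using k by simp
  have E1: "expect_seqs \<beta> k (\<lambda>ts. fobj A b \<beta> (paskm_ybar A b sel \<alpha> \<omega> \<delta> \<gamma> x0 ts))
      \<le> avg (sample_seqs \<beta> k) (\<lambda>ts. (1/real k) * (\<Sum>l=1..k. fobj A b \<beta> (Yv (St x0 (take l ts)))))"
    unfolding expect_avg
  proof (rule avg_mono)
    fix ts assume "ts \<in> (sample_seqs \<beta> k :: 'm set list set)"
    then have len: "length ts = k" unfolding sample_seqs_def by simp
    show "fobj A b \<beta> (paskm_ybar A b sel \<alpha> \<omega> \<delta> \<gamma> x0 ts)
        \<le> (1/real k) * (\<Sum>l=1..k. fobj A b \<beta> (Yv (St x0 (take l ts))))"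
      unfolding paskm_ybar_def paskm_y_St len by (rule jensen[OF k])
  qed
  also have "\<dots> = (1/real k) * (\<Sum>l=1..k. Fy x0 l)"
  proof -
    have "(\<Sum>l=1..k. avg (sample_seqs \<beta> k) (\<lambda>ts. fobj A b \<beta> (Yv (St x0 (take l ts))))) = (\<Sum>l=1..k. Fy x0 l)"
      unfolding Fy_def
    proof (rule sum.cong)
      fix l assume "l \<in> {1..k}"
      then show "avg (sample_seqs \<beta> k) (\<lambda>ts. fobj A b \<beta> (Yv (St x0 (take l ts)))) = avg (sample_seqs \<beta> l) (\<lambda>ts. fobj A b \<beta> (Yv (St x0 ts)))"
        using avg_take[OF beta(2), where F="\<lambda>ts. fobj A b \<beta> (Yv (St x0 ts))"] by simp
    qed simp
    then show ?thesis unfolding avg_cmult avg_sum by simp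
  qed
  also have "\<dots> = (2*\<delta>*D*(\<Sum>l=1..k. Fy x0 l)) / (2*\<delta>*real k*D)"
    using Dpos delta kpos by (simp add: field_simps)
  also have "\<dots> \<le> N / (2*\<delta>*real k*D)"
    using S Dpos delta kpos by (intro divide_right_mono) auto
  also have "N / (2*\<delta>*real k*D) = ((1 - \<omega> + \<alpha> * \<omega>)^2 * (infdist x0 (feas_set A b))^2
         + 2 * \<delta> * (\<delta> - 2 + 3 * \<omega> - 3 * \<alpha> * \<omega> + \<delta> * \<omega> - \<delta> * \<alpha> * \<omega>) * fobj A b \<beta> x0)
       / (2 * \<delta> * real k * (2 - 2 * \<omega> + 2 * \<alpha> * \<omega> - 2 * \<delta> * \<omega> + 2 * \<delta> * \<alpha> * \<omega> - \<delta>))"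
  proof -
    have "N = (1 - \<omega> + \<alpha> * \<omega>)^2 * (infdist x0 (feas_set A b))^2
         + 2 * \<delta> * (\<delta> - 2 + 3 * \<omega> - 3 * \<alpha> * \<omega> + \<delta> * \<omega> - \<delta> * \<alpha> * \<omega>) * fobj A b \<beta> x0"
      unfolding N_def pd dist_norm by (simp add: algebra_simps)
    moreover have "2*\<delta>*real k*D = 2 * \<delta> * real k * (2 - 2 * \<omega> + 2 * \<alpha> * \<omega> - 2 * \<delta> * \<omega> + 2 * \<delta> * \<alpha> * \<omega> - \<delta>)"
      unfolding D_def by (simp add: algebra_simps)
    ultimately show ?thesis by simp
  qed
  finally show ?thesis .
qed


end
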